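(* For any $d_x,K\in\mathbb N$ and any $\gamma>0$, there exist a $\textsc{ReLU}$ network $f:\mathbb R^{d_x}\rightarrow\mathbb R$ of width $d_x+1$ and a set $\mathcal D_\gamma\subset[0,1]^{d_x}$ such that $f(x)=\mathtt{encode}_K(x)$ for all $x\in[0,1]^{d_x}\setminus\mathcal D_\gamma$, $\mu(\mathcal D_\gamma)<\gamma$, $f(\mathcal D_\gamma)\subset[0,1]$, and $f(\mathbb R^{d_x}\setminus[0,1]^{d_x})=\{1-2^{-d_xK}\}$, where $\mu$ denotes Lebesgue measure.
   Context: $\mathcal C_K:=\{0,2^{-K},2\cdot2^{-K},\dots,1-2^{-K}\}$, $q_K:[0,1]\to\mathcal C_K$, $q_K(t)=\max\{c\in\mathcal C_K:c\le t\}$. For $x\in[0,1]^{d_x}$, $\mathtt{encode}_K(x):=\sum_{i=1}^{d_x}q_K(x_i)\,2^{-(i-1)K}$. A $\textsc{ReLU}$ network is $t_L\circ\sigma_{L-1}\circ\cdots\circ\sigma_1\circ t_1$ with affine $t_\ell:\mathbb R^{d_{\ell-1}}\to\mathbb R^{d_\ell}$ and coordinatewise $\textsc{ReLU}$ $\sigma_\ell$; its width is $\max\{d_1,\dots,d_{L-1}\}$. *)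

theory Defs
  imports "HOL-Analysis.Analysis"
begin

(* Vectors in R^m are functions nat => real; only components < m matter. *)

definition dyadic_grid :: "nat \<Rightarrow> real set" where
  "dyadic_grid K = {real j / 2 ^ K | j. j < 2 ^ K}"

definition qK :: "nat \<Rightarrow> real \<Rightarrow> real" where
  "qK K t = Max {c \<in> dyadic_grid K. c \<le> t}"

(* encode_K(x) = sum_{i=1}^{d} q_K(x_i) 2^{-(i-1)K}, coordinates indexed 0..d-1 here *)
definition encode :: "nat \<Rightarrow> nat \<Rightarrow> (nat \<Rightarrow> real) \<Rightarrow> real" where
  "encode K d x = (\<Sum>i<d. qK K (x i) * (1/2) ^ (i * K))"

definition affine :: "(nat \<Rightarrow> nat \<Rightarrow> real) \<Rightarrow> (nat \<Rightarrow> real) \<Rightarrow> nat \<Rightarrow> (nat \<Rightarrow> real) \<Rightarrow> (nat \<Rightarrow> real)" where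
  "affine W b m x = (\<lambda>i. (\<Sum>j<m. W i j * x j) + b i)"

definition relu :: "(nat \<Rightarrow> real) \<Rightarrow> (nat \<Rightarrow> real)" where
  "relu x = (\<lambda>i. max 0 (x i))"

(* ds = [d_0, d_1, ..., d_L] layer dimensions; ls = [(W_1,b_1), ..., (W_L,b_L)] *)
fun net_eval :: "nat list \<Rightarrow> ((nat \<Rightarrow> nat \<Rightarrow> real) \<times> (nat \<Rightarrow> real)) list \<Rightarrow> (nat \<Rightarrow> real) \<Rightarrow> (nat \<Rightarrow> real)" where
  "net_eval (m # ms) [(W, b)] x = affine W b m x"
| "net_eval (m # ms) ((W, b) # l # ls) x = net_eval ms (l # ls) (relu (affine W b m x))"
| "net_eval _ _ x = x"

definition relu_net :: "nat \<Rightarrow> nat \<Rightarrow> nat list \<Rightarrow> ((nat \<Rightarrow> nat \<Rightarrow> real) \<times> (nat \<Rightarrow> real)) list \<Rightarrow> bool" where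
  "relu_net din dout ds ls \<longleftrightarrow> ls \<noteq> [] \<and> length ds = length ls + 1 \<and> hd ds = din \<and> last ds = dout"

definition net_width :: "nat list \<Rightarrow> nat" where
  "net_width ds = foldr max (butlast (tl ds)) 0"

end

theory Submission
  imports Defs
begin


datatype upd = Upd nat nat real nat real nat real real

fun Wof :: "upd \<Rightarrow> nat \<Rightarrow> nat \<Rightarrow> real" where
  "Wof (Upd a i1 a1 i2 a2 i3 a3 b) = (\<lambda>i j. if i = a then
      (if j = i1 then a1 else 0) + (if j = i2 then a2 else 0) + (if j = i3 then a3 else 0)
     else if i = j then 1 else 0)"

fun bof :: "upd \<Rightarrow> nat \<Rightarrow> real" where
  "bof (Upd a i1 a1 i2 a2 i3 a3 b) = (\<lambda>i. if i = a then b else 0)"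

definition step :: "nat \<Rightarrow> upd \<Rightarrow> (nat \<Rightarrow> real) \<Rightarrow> (nat \<Rightarrow> real)" where
  "step n p v = relu (affine (Wof p) (bof p) n v)"

fun exec :: "nat \<Rightarrow> upd list \<Rightarrow> (nat \<Rightarrow> real) \<Rightarrow> (nat \<Rightarrow> real)" where
  "exec n [] v = v"
| "exec n (p # ps) v = exec n ps (step n p v)"

lemma exec_append: "exec n (ps @ qs) v = exec n qs (exec n ps v)"
  by (induction ps arbitrary: v) auto

lemma step_val:
  assumes "i1 < n" "i2 < n" "i3 < n"
  shows "step n (Upd a i1 a1 i2 a2 i3 a3 b) v i =
    (if i = a then max 0 (a1 * v i1 + a2 * v i2 + a3 * v i3 + b)
     else if i < n then max 0 (v i) else 0)"
proof -
  have s: "(\<Sum>j<n. ((if j = i1 then a1 else 0) + (if j = i2 then a2 else 0) + (if j = i3 then a3 else 0)) * v j)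
     = a1 * v i1 + a2 * v i2 + a3 * v i3"
  proof -
    have "(\<Sum>j<n. ((if j = i1 then a1 else 0) + (if j = i2 then a2 else 0) + (if j = i3 then a3 else 0)) * v j)
      = (\<Sum>j<n. (if j = i1 then a1 * v j else 0)) + (\<Sum>j<n. (if j = i2 then a2 * v j else 0)) + (\<Sum>j<n. (if j = i3 then a3 * v j else 0))"
      by (subst sum.distrib[symmetric], subst sum.distrib[symmetric], rule sum.cong) (auto simp: distrib_right)
    also have "\<dots> = a1 * v i1 + a2 * v i2 + a3 * v i3"
      using assms by (simp add: sum.delta' distrib_right)
    finally show ?thesis .
  qed
  have t: "(\<Sum>j<n. (if i = j then 1 else 0) * v j) = (if i < n then v i else 0)" 
  proof -
    have "(\<Sum>j<n. (if i = j then 1 else 0) * v j) = (\<Sum>j<n. if i = j then v i else 0)"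
      by (rule sum.cong) auto
    then show ?thesis by simp
  qed
  show ?thesis
    unfolding step_def relu_def affine_def using s t by auto
qed

lemma step_nonneg: "step n p v i \<ge> 0"
  by (simp add: step_def relu_def)

lemma exec_nonneg: "(\<forall>i. v i \<ge> 0) \<Longrightarrow> exec n ps v i \<ge> 0"
  by (induction ps arbitrary: v) (auto simp: step_nonneg)

definition mk :: "upd \<Rightarrow> (nat \<Rightarrow> nat \<Rightarrow> real) \<times> (nat \<Rightarrow> real)" where
  "mk p = (Wof p, bof p)"

lemma net_exec:
  "net_eval (n # replicate (length P) n @ [d]) (map mk P @ [(Wf, bf)]) v = affine Wf bf n (exec n P v)"
proof (induction P arbitrary: v)
  case Nil
  then show ?case by simp
next
  case (Cons p P)
  obtain l ls where e: "map mk P @ [(Wf, bf)] = l # ls" by (cases "map mk P @ [(Wf, bf)]") auto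
  have "net_eval (n # replicate (length (p # P)) n @ [d]) (map mk (p # P) @ [(Wf, bf)]) v
     = net_eval (n # replicate (length P) n @ [d]) (map mk P @ [(Wf, bf)]) (step n p v)"
    by (simp add: mk_def e step_def)
  then show ?case using Cons by simp
qed

lemma foldr_max_rep: "foldr max (replicate (Suc k) (n::nat)) 0 = n"
  by (induction k) auto



definition Lq :: "nat \<Rightarrow> real \<Rightarrow> nat \<Rightarrow> real \<Rightarrow> real" where
  "Lq m \<theta> k w = (real k - 1 + (2 ^ m * w - real k + \<theta>) / \<theta>) / 2 ^ m"

fun Gq :: "nat \<Rightarrow> real \<Rightarrow> nat \<Rightarrow> real \<Rightarrow> real" where
  "Gq m \<theta> 0 w = 0"
| "Gq m \<theta> (Suc k) w = min (real (Suc k) / 2 ^ m) (max (Gq m \<theta> k w) (Lq m \<theta> (Suc k) w))"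

definition Qf :: "nat \<Rightarrow> real \<Rightarrow> real \<Rightarrow> real" where
  "Qf m \<theta> w = Gq m \<theta> (2 ^ m) w"

lemma Gq_nonneg: "0 \<le> Gq m \<theta> k w"
  by (induction k) auto

lemma Gq_le: "Gq m \<theta> k w \<le> real k / 2 ^ m"
  by (induction k) auto

lemma Qf_nonneg: "0 \<le> Qf m \<theta> w"
  by (simp add: Qf_def Gq_nonneg)

lemma Qf_ge1:
  assumes "\<theta> > 0" "w \<ge> 1"
  shows "Qf m \<theta> w = 1"
proof -
  obtain N where N: "(2::nat) ^ m = Suc N" using not0_implies_Suc[of "2^m"] by auto
  have NR: "(2::real) ^ m = real (Suc N)" using N by (metis of_nat_numeral of_nat_power)
  have "2 ^ m * w - real (Suc N) \<ge> 0" using assms NR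
    by (metis diff_ge_0_iff_ge mult_cancel_left1 mult_left_mono of_nat_0_le_iff)
  then have "(2 ^ m * w - real (Suc N) + \<theta>) / \<theta> \<ge> 1" using assms by simp
  then have "Lq m \<theta> (Suc N) w \<ge> 1" unfolding Lq_def NR by (simp add: field_simps)
  then have "Gq m \<theta> (Suc N) w = 1" using NR by simp
  then show ?thesis unfolding Qf_def N by simp
qed

lemma Gq_good:
  assumes "0 < \<theta>" "\<theta> \<le> 1" "0 \<le> r" "r \<le> 1 - \<theta>" "w = (real h + r) / 2 ^ m"
  shows "Gq m \<theta> k w = real (min k h) / 2 ^ m"
proof (induction k)
  case 0
  then show ?case by simp
next
  case (Suc k)
  have y: "2 ^ m * w = real h + r" using assms(5) by simp
  have L: "Lq m \<theta> (Suc k) w = (real k + (real h + r - real (Suc k) + \<theta>) / \<theta>) / 2 ^ m"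
    unfolding Lq_def y by simp
  show ?case
  proof (cases "Suc k \<le> h")
    case True
    have "real h + r - real (Suc k) + \<theta> \<ge> \<theta>" using True assms by simp
    then have "(real h + r - real (Suc k) + \<theta>) / \<theta> \<ge> 1" using assms by simp
    then have "Lq m \<theta> (Suc k) w \<ge> real (Suc k) / 2 ^ m" unfolding L
      by (simp add: divide_right_mono)
    moreover have "min k h = k" using True by simp
    ultimately show ?thesis using Suc True by simp
  next
    case False
    have "real h - real k \<le> 0" using False by linarith
    have "real h + r - real (Suc k) + \<theta> \<le> real h - real k" using assms by simp
    then have "(real h + r - real (Suc k) + \<theta>) / \<theta> \<le> (real h - real k) / \<theta>"
      using assms by (simp add: divide_right_mono)
    also have "\<dots> \<le> real h - real k"
    proof -
      have "(real h - real k) * 1 \<le> (real h - real k) * \<theta>"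
        using mult_left_mono_neg[OF assms(2) \<open>real h - real k \<le> 0\<close>] by simp
      then show ?thesis using assms by (simp add: divide_le_eq)
    qed
    finally have "real k + (real h + r - real (Suc k) + \<theta>) / \<theta> \<le> real h" by simp
    then have "Lq m \<theta> (Suc k) w \<le> real h / 2 ^ m" unfolding L
      by (simp add: divide_right_mono)
    moreover have "min k h = h" "min (Suc k) h = h" using False by auto
    ultimately show ?thesis using Suc False by (simp add: divide_right_mono)
  qed
qed

lemma Qf_good:
  assumes "0 < \<theta>" "\<theta> \<le> 1" "0 \<le> r" "r \<le> 1 - \<theta>" "h < 2 ^ m"
  shows "Qf m \<theta> ((real h + r) / 2 ^ m) = real h / 2 ^ m"
proof -
  have "Gq m \<theta> (2^m) ((real h + r)/2^m) = real (min (2^m) h)/2^m" by (rule Gq_good[OF assms(1-4)]) simp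
  then show ?thesis using assms(5) unfolding Qf_def by simp
qed

definition psi :: "real \<Rightarrow> real \<Rightarrow> real \<Rightarrow> real" where
  "psi M \<delta> t = max 0 (t - 1 + M * max 0 (1 + \<delta> - t)) + M * max 0 (max 0 (t - 1 + M * max 0 (1 + \<delta> - t)) - M * max 0 (1 + \<delta> - t) - 1 + \<delta>)"

lemma psi_nonneg: "M \<ge> 0 \<Longrightarrow> psi M \<delta> t \<ge> 0"
  unfolding psi_def by simp

lemma psi_in:
  assumes "\<delta> \<le> x" "x \<le> 1 - \<delta>" "M \<ge> 1" "0 \<le> \<delta>"
  shows "psi M \<delta> (max 0 (x + 1)) = x"
  using assms unfolding psi_def by auto

lemma psi_out:
  assumes "x < 0 \<or> x > 1" "M \<ge> 1" "\<delta> \<ge> 0"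
  shows "psi M \<delta> (max 0 (x + 1)) \<ge> M * \<delta>"
proof -
  define t where "t = max 0 (x + 1)"
  have p: "max 0 (t - 1 + M * max 0 (1 + \<delta> - t)) = t - 1 + M * max 0 (1 + \<delta> - t)"
  proof (cases "t \<ge> 1")
    case True then show ?thesis using assms by (simp add: max_def)
  next
    case False
    then have "M * max 0 (1 + \<delta> - t) \<ge> 1 * (1 - t)" using assms
      by (intro mult_mono) auto
    then show ?thesis by simp
  qed
  have "psi M \<delta> t = t - 1 + M * max 0 (1 + \<delta> - t) + M * max 0 (t - 2 + \<delta>)"
    unfolding psi_def p by (simp add: algebra_simps)
  moreover have "t - 1 + M * max 0 (1 + \<delta> - t) + M * max 0 (t - 2 + \<delta>) \<ge> M * \<delta>"
  proof (cases "x < 0")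
    case True
    then have t: "0 \<le> t" "t < 1" unfolding t_def by auto
    have "M * max 0 (1 + \<delta> - t) = M * \<delta> + M * (1 - t)" using t assms by (simp add: max_def algebra_simps)
    moreover have "M * (1 - t) \<ge> 1 * (1 - t)" using t assms by (intro mult_right_mono) auto
    then have "M * (1 - t) \<ge> 1 - t" by simp
    moreover have "M * max 0 (t - 2 + \<delta>) \<ge> 0" using assms by simp
    ultimately show ?thesis by linarith
  next
    case False
    then have t: "t = x + 1" "x > 1" using assms unfolding t_def by auto
    have "M * max 0 (t - 2 + \<delta>) \<ge> M * \<delta>" using t assms by (intro mult_left_mono) auto
    moreover have "M * max 0 (1 + \<delta> - t) \<ge> 0" using assms by simp
    ultimately show ?thesis using t by linarith
  qed
  ultimately show ?thesis unfolding t_def by simp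
qed



definition lc :: "nat \<Rightarrow> real \<Rightarrow> nat \<Rightarrow> real" where
  "lc m \<theta> k = (real k - 1 + (\<theta> - real k) / \<theta>) / 2 ^ m"

lemma Lq_lc: "\<theta> > 0 \<Longrightarrow> Lq m \<theta> k w = w / \<theta> + lc m \<theta> k"
  unfolding Lq_def lc_def by (simp add: field_simps)

fun qprog :: "nat \<Rightarrow> real \<Rightarrow> nat \<Rightarrow> nat \<Rightarrow> nat \<Rightarrow> upd list" where
  "qprog m \<theta> u s 0 = [Upd s s 0 s 0 s 0 0]"
| "qprog m \<theta> u s (Suc k) = qprog m \<theta> u s k @
    [Upd s s (-1) u (-1/\<theta>) u 0 (real k / 2 ^ m - lc m \<theta> (Suc k)),
     Upd s s (-1) u (-1/\<theta>) u 0 (real (Suc k) / 2 ^ m - lc m \<theta> (Suc k))]"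

lemma qprog_sem:
  assumes "u < n" "s < n" "u \<noteq> s" "\<theta> > 0" "\<forall>i. v i \<ge> 0"
  shows "exec n (qprog m \<theta> u s k) v u = v u \<and>
    (\<forall>i<n. i \<noteq> s \<longrightarrow> exec n (qprog m \<theta> u s k) v i = v i) \<and>
    real k / 2 ^ m - exec n (qprog m \<theta> u s k) v s = Gq m \<theta> k (v u)"
proof (induction k)
  case 0
  show ?case using assms by (simp add: step_val)
next
  case (Suc k)
  define V where "V = exec n (qprog m \<theta> u s k) v"
  have Vn: "\<forall>i. V i \<ge> 0" unfolding V_def using assms(5) by (simp add: exec_nonneg)
  define V1 where "V1 = step n (Upd s s (-1) u (-1/\<theta>) u 0 (real k / 2 ^ m - lc m \<theta> (Suc k))) V"
  define V2 where "V2 = step n (Upd s s (-1) u (-1/\<theta>) u 0 (real (Suc k) / 2 ^ m - lc m \<theta> (Suc k))) V1"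
  have E: "exec n (qprog m \<theta> u s (Suc k)) v = V2"
    unfolding V2_def V1_def V_def by (simp add: exec_append)
  have V1s: "V1 s = max 0 (- V s - V u / \<theta> + real k / 2 ^ m - lc m \<theta> (Suc k))"
    unfolding V1_def using assms by (simp add: step_val)
  have V1o: "\<forall>i<n. i \<noteq> s \<longrightarrow> V1 i = V i"
    unfolding V1_def using assms Vn by (simp add: step_val)
  have V2s: "V2 s = max 0 (- V1 s - V1 u / \<theta> + real (Suc k) / 2 ^ m - lc m \<theta> (Suc k))"
    unfolding V2_def using assms by (simp add: step_val)
  have V2o: "\<forall>i<n. i \<noteq> s \<longrightarrow> V2 i = V1 i"
    unfolding V2_def using assms Vn V1o by (simp add: step_val step_nonneg)
  have IH: "V u = v u" "\<forall>i<n. i \<noteq> s \<longrightarrow> V i = v i" "real k / 2 ^ m - V s = Gq m \<theta> k (v u)"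
    using Suc unfolding V_def by auto
  define G where "G = Gq m \<theta> k (v u)"
  define L where "L = Lq m \<theta> (Suc k) (v u)"
  have L': "L = v u / \<theta> + lc m \<theta> (Suc k)" unfolding L_def using assms Lq_lc by simp
  have "V1 s = max 0 (G - L)" using V1s IH L' unfolding G_def by (simp add: algebra_simps)
  moreover have "V1 u = v u" using V1o IH assms by simp
  ultimately have "V2 s = max 0 (real (Suc k) / 2 ^ m - L - max 0 (G - L))"
    using V2s L' by (simp add: algebra_simps)
  then have "real (Suc k) / 2 ^ m - V2 s = Gq m \<theta> (Suc k) (v u)"
    unfolding G_def L_def by (simp add: max_def min_def)
  moreover have "V2 u = v u" using V2o V1o IH assms by simp
  moreover have "\<forall>i<n. i \<noteq> s \<longrightarrow> V2 i = v i" using V2o V1o IH by simp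
  ultimately show ?case unfolding E by simp
qed



definition sc :: "nat \<Rightarrow> nat \<Rightarrow> nat" where
  "sc dx j = (if j = 0 then dx else j - 1)"

definition wc :: "nat \<Rightarrow> nat \<Rightarrow> nat" where
  "wc dx j = sc dx (j - 1)"

definition gcoef :: "nat \<Rightarrow> real" where "gcoef j = (if j = 0 then 0 else -1)"
definition gconst :: "nat \<Rightarrow> real" where "gconst j = (if j = 0 then 0 else 1)"

definition block :: "nat \<Rightarrow> nat \<Rightarrow> real \<Rightarrow> real \<Rightarrow> real \<Rightarrow> nat \<Rightarrow> upd list" where
  "block dx K \<theta> \<delta> M j =
    [Upd (sc dx j) j (-1) j 0 j 0 (1 + \<delta>),
     Upd j j 1 (sc dx j) M j 0 (-1),
     Upd (sc dx j) j 1 (sc dx j) (-M) j 0 (\<delta> - 1),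
     Upd j (wc dx j) (gcoef j) j (1 / 2 ^ (j * K)) (sc dx j) (M / 2 ^ (j * K)) (gconst j)]
    @ qprog (Suc j * K) \<theta> j (sc dx j) (2 ^ (Suc j * K))"

lemma sc_lt: "j < dx \<Longrightarrow> sc dx j < Suc dx" unfolding sc_def by auto
lemma wc_lt: "j < dx \<Longrightarrow> wc dx j < Suc dx" unfolding wc_def sc_def by auto
lemma sc_ne: "j < dx \<Longrightarrow> sc dx j \<noteq> j" unfolding sc_def by auto
lemma wc_ne: "j < dx \<Longrightarrow> 0 < j \<Longrightarrow> wc dx j \<noteq> j \<and> wc dx j \<noteq> sc dx j"
  unfolding wc_def sc_def by auto

lemma block_sem:
  assumes "j < dx" "\<theta> > 0" "\<forall>i. v i \<ge> 0"
  shows "(\<forall>i<Suc dx. i \<noteq> j \<and> i \<noteq> sc dx j \<longrightarrow> exec (Suc dx) (block dx K \<theta> \<delta> M j) v i = v i) \<and>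
    1 - exec (Suc dx) (block dx K \<theta> \<delta> M j) v (sc dx j) =
      Qf (Suc j * K) \<theta> (max 0 (gconst j + gcoef j * v (wc dx j) + psi M \<delta> (v j) / 2 ^ (j * K)))"
proof -
  let ?n = "Suc dx"
  let ?s = "sc dx j"
  let ?w = "wc dx j"
  have jn: "j < ?n" using assms by simp
  have sn: "?s < ?n" using sc_lt assms by simp
  have wn: "?w < ?n" using wc_lt assms by simp
  have sj: "?s \<noteq> j" using sc_ne assms by simp
  define t where "t = v j"
  define V1 where "V1 = step ?n (Upd ?s j (-1) j 0 j 0 (1 + \<delta>)) v"
  define V2 where "V2 = step ?n (Upd j j 1 ?s M j 0 (-1)) V1"
  define V3 where "V3 = step ?n (Upd ?s j 1 ?s (-M) j 0 (\<delta> - 1)) V2"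
  define V4 where "V4 = step ?n (Upd j ?w (gcoef j) j (1 / 2 ^ (j * K)) ?s (M / 2 ^ (j * K)) (gconst j)) V3"
  have E: "exec ?n (block dx K \<theta> \<delta> M j) v = exec ?n (qprog (Suc j * K) \<theta> j ?s (2 ^ (Suc j * K))) V4"
    unfolding block_def V4_def V3_def V2_def V1_def by (simp add: exec_append)
  have h2: "V1 ?s = max 0 (1 + \<delta> - t)" unfolding V1_def t_def using jn by (simp add: step_val)
  have V1o: "\<forall>i<?n. i \<noteq> ?s \<longrightarrow> V1 i = v i" unfolding V1_def using jn assms by (simp add: step_val)
  have p: "V2 j = max 0 (t - 1 + M * max 0 (1 + \<delta> - t))"
    unfolding V2_def using jn sn V1o h2 sj t_def by (simp add: step_val algebra_simps)
  have V2o: "\<forall>i<?n. i \<noteq> j \<longrightarrow> V2 i = V1 i" unfolding V2_def using jn sn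
    by (simp add: step_val V1_def step_nonneg)
  have h1: "V3 ?s = max 0 (max 0 (t - 1 + M * max 0 (1 + \<delta> - t)) - M * max 0 (1 + \<delta> - t) - 1 + \<delta>)"
    unfolding V3_def using jn sn p V2o h2 sj by (simp add: step_val algebra_simps)
  have V3o: "\<forall>i<?n. i \<noteq> ?s \<longrightarrow> V3 i = V2 i" unfolding V3_def using jn sn
    by (simp add: step_val V2_def step_nonneg)
  have V3j: "V3 j = V2 j" using V3o jn sj by auto
  have W: "V4 j = max 0 (gconst j + gcoef j * v ?w + psi M \<delta> t / 2 ^ (j * K))"
  proof -
    have a: "V4 j = max 0 (gcoef j * V3 ?w + 1 / 2 ^ (j * K) * V3 j + M / 2 ^ (j * K) * V3 ?s + gconst j)"
      unfolding V4_def using jn sn wn by (simp add: step_val)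
    have b: "gcoef j * V3 ?w = gcoef j * v ?w"
    proof (cases "j = 0")
      case True then show ?thesis by (simp add: gcoef_def)
    next
      case False
      then have "?w \<noteq> j" "?w \<noteq> ?s" using wc_ne assms by auto
      then show ?thesis using V3o V2o V1o wn by simp
    qed
    have c: "1 / 2 ^ (j * K) * V3 j + M / 2 ^ (j * K) * V3 ?s = psi M \<delta> t / 2 ^ (j * K)"
      unfolding V3j p h1 psi_def by (simp add: field_simps)
    show ?thesis unfolding a b using c by (simp add: algebra_simps)
  qed
  have V4o: "\<forall>i<?n. i \<noteq> j \<longrightarrow> V4 i = V3 i" unfolding V4_def using jn sn wn
    by (simp add: step_val V3_def step_nonneg)
  have V4n: "\<forall>i. V4 i \<ge> 0" unfolding V4_def by (simp add: step_nonneg)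
  note Q = qprog_sem[OF jn sn sj[symmetric] assms(2) V4n, of "Suc j * K" "2 ^ (Suc j * K)"]
  have "real ((2::nat) ^ (Suc j * K)) / 2 ^ (Suc j * K) = (1::real)" by simp
  then have r1: "1 - exec ?n (block dx K \<theta> \<delta> M j) v ?s = Qf (Suc j * K) \<theta> (V4 j)"
    using Q unfolding E Qf_def by simp
  have r2: "\<forall>i<?n. i \<noteq> j \<and> i \<noteq> ?s \<longrightarrow> exec ?n (block dx K \<theta> \<delta> M j) v i = v i"
    using Q V4o V3o V2o V1o unfolding E by simp
  show ?thesis using r1 r2 W t_def by simp
qed



definition good :: "real \<Rightarrow> nat \<Rightarrow> real \<Rightarrow> bool" where
  "good \<delta> K x \<longleftrightarrow> 0 \<le> x \<and> x \<le> 1 \<and> (\<forall>h \<le> (2::nat) ^ K. \<delta> < \<bar>x - real h / 2 ^ K\<bar>)"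

lemma qK_eq:
  assumes "h < 2 ^ K" "real h / 2 ^ K \<le> x" "x < (real h + 1) / 2 ^ K"
  shows "qK K x = real h / 2 ^ K"
proof -
  have fin: "finite (dyadic_grid K)"
  proof -
    have "dyadic_grid K = (\<lambda>j. real j / 2 ^ K) ` {..<2 ^ K}" unfolding dyadic_grid_def by auto
    then show ?thesis by simp
  qed
  show ?thesis unfolding qK_def
  proof (rule Max_eqI)
    show "finite {c \<in> dyadic_grid K. c \<le> x}" using fin by simp
    show "real h / 2 ^ K \<in> {c \<in> dyadic_grid K. c \<le> x}" using assms unfolding dyadic_grid_def by auto
    fix y assume "y \<in> {c \<in> dyadic_grid K. c \<le> x}"
    then obtain j where y: "y = real j / 2 ^ K" "y \<le> x" unfolding dyadic_grid_def by auto
    then have "real j / 2 ^ K < (real h + 1) / 2 ^ K" using assms by simp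
    then have "real j < real h + 1" by (simp add: divide_strict_right_mono_neg field_simps)
    then have "j \<le> h" by linarith
    then show "y \<le> real h / 2 ^ K" using y by (simp add: divide_right_mono)
  qed
qed

lemma good_decomp:
  assumes "good \<delta> K x" "\<delta> \<ge> 0"
  shows "\<exists>h r. h < 2 ^ K \<and> x = (real h + r) / 2 ^ K \<and> \<delta> * 2 ^ K \<le> r \<and> r \<le> 1 - \<delta> * 2 ^ K
     \<and> qK K x = real h / 2 ^ K \<and> \<delta> \<le> x \<and> x \<le> 1 - \<delta>"
proof -
  have x01: "0 \<le> x" "x \<le> 1" and far: "\<And>h. h \<le> 2 ^ K \<Longrightarrow> \<delta> < \<bar>x - real h / 2 ^ K\<bar>"
    using assms unfolding good_def by auto
  define h where "h = nat \<lfloor>2 ^ K * x\<rfloor>"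
  have fl: "real h \<le> 2 ^ K * x" "2 ^ K * x < real h + 1"
    unfolding h_def using x01 by (auto simp: of_nat_nat)
  have x1: "x \<noteq> 1" using far[of "2^K"] assms(2) by auto
  then have "2 ^ K * x < 2 ^ K" using x01 by simp
  then have hl: "h < 2 ^ K" using fl by (metis not_less of_nat_le_iff of_nat_numeral of_nat_power order_le_less_trans less_le_not_le)
  define r where "r = 2 ^ K * x - real h"
  have xr: "x = (real h + r) / 2 ^ K" unfolding r_def by simp
  have d1: "\<delta> < \<bar>x - real h / 2 ^ K\<bar>" using far hl by simp
  have d2: "\<delta> < \<bar>x - real (h + 1) / 2 ^ K\<bar>" using far[of "h+1"] hl by linarith
  have e1: "x - real h / 2 ^ K = r / 2 ^ K" unfolding r_def by (simp add: field_simps)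
  have e2: "x - real (h + 1) / 2 ^ K = (r - 1) / 2 ^ K" unfolding r_def by (simp add: field_simps)
  have r01: "0 \<le> r" "r < 1" unfolding r_def using fl by auto
  have "\<delta> < r / 2 ^ K" using d1 e1 r01 by simp
  then have rl: "\<delta> * 2 ^ K \<le> r" by (simp add: field_simps)
  have "\<delta> < (1 - r) / 2 ^ K" using d2 e2 r01 by (simp add: abs_if field_simps)
  then have ru: "r \<le> 1 - \<delta> * 2 ^ K" by (simp add: field_simps)
  have q: "qK K x = real h / 2 ^ K"
    by (rule qK_eq[OF hl]) (use fl in \<open>auto simp: field_simps\<close>)
  have "\<delta> < \<bar>x - real 0 / 2 ^ K\<bar>" using far by blast
  then have xl: "\<delta> \<le> x" using x01 by simp
  have "\<delta> < \<bar>x - real (2^K) / 2 ^ K\<bar>" using far by blast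
  then have xu: "x \<le> 1 - \<delta>" using x01 by simp
  show ?thesis using hl xr rl ru q xl xu by blast
qed



definition blocks :: "nat \<Rightarrow> nat \<Rightarrow> real \<Rightarrow> real \<Rightarrow> real \<Rightarrow> nat \<Rightarrow> upd list" where
  "blocks dx K \<theta> \<delta> M j = concat (map (block dx K \<theta> \<delta> M) [0..<j])"

definition W0 :: "nat \<Rightarrow> nat \<Rightarrow> real" where "W0 i j = (if i = j then 1 else 0)"
definition b0 :: "nat \<Rightarrow> nat \<Rightarrow> real" where "b0 dx i = (if i < dx then 1 else 0)"

lemma v0_val: "relu (affine W0 (b0 dx) dx x) i = (if i < dx then max 0 (x i + 1) else 0)"
proof -
  have "(\<Sum>j<dx. W0 i j * x j) = (\<Sum>j<dx. if i = j then x i else 0)"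
    unfolding W0_def by (rule sum.cong) auto
  then show ?thesis unfolding relu_def affine_def b0_def by simp
qed

definition Gs :: "nat \<Rightarrow> (nat \<Rightarrow> real) \<Rightarrow> nat \<Rightarrow> real" where
  "Gs dx V j = gconst j + gcoef j * V (wc dx j)"

lemma chain:
  fixes x :: "nat \<Rightarrow> real"
  assumes "j \<le> dx" "0 < \<delta>" "\<theta> = \<delta> * 2 ^ K" "\<theta> \<le> 1" "M \<ge> 1" "M * \<delta> = 2 ^ (dx * K)"
  defines "V \<equiv> exec (Suc dx) (blocks dx K \<theta> \<delta> M j) (relu (affine W0 (b0 dx) dx x))"
  shows "(\<forall>i. j \<le> i \<and> i < dx \<longrightarrow> V i = max 0 (x i + 1)) \<and> Gs dx V j \<ge> 0 \<and>
    ((\<exists>i<j. x i < 0 \<or> x i > 1) \<longrightarrow> Gs dx V j = 1) \<and>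
    ((\<forall>i<j. good \<delta> K (x i)) \<longrightarrow> (\<exists>H::nat. H < 2 ^ (j * K) \<and> Gs dx V j = real H / 2 ^ (j * K) \<and>
        Gs dx V j = (\<Sum>i<j. qK K (x i) * (1/2) ^ (i * K))))"
  using assms(1) unfolding V_def
proof (induction j)
  case 0
  show ?case by (simp add: blocks_def v0_val Gs_def gconst_def gcoef_def)
next
  case (Suc j)
  let ?V = "exec (Suc dx) (blocks dx K \<theta> \<delta> M j) (relu (affine W0 (b0 dx) dx x))"
  let ?V' = "exec (Suc dx) (blocks dx K \<theta> \<delta> M (Suc j)) (relu (affine W0 (b0 dx) dx x))"
  have jd: "j < dx" using Suc by simp
  have IH: "\<forall>i. j \<le> i \<and> i < dx \<longrightarrow> ?V i = max 0 (x i + 1)" "Gs dx ?V j \<ge> 0"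
    "(\<exists>i<j. x i < 0 \<or> x i > 1) \<longrightarrow> Gs dx ?V j = 1"
    "(\<forall>i<j. good \<delta> K (x i)) \<longrightarrow> (\<exists>H::nat. H < 2 ^ (j * K) \<and> Gs dx ?V j = real H / 2 ^ (j * K) \<and>
        Gs dx ?V j = (\<Sum>i<j. qK K (x i) * (1/2) ^ (i * K)))"
    using Suc by auto
  have Vn: "\<forall>i. ?V i \<ge> 0" by (intro allI exec_nonneg) (simp add: relu_def)
  have th: "\<theta> > 0" using assms by simp
  have E: "?V' = exec (Suc dx) (block dx K \<theta> \<delta> M j) ?V"
    unfolding blocks_def by (simp add: exec_append)
  note B = block_sem[OF jd th Vn, of K \<delta> M]
  have xj: "?V j = max 0 (x j + 1)" using IH(1) jd by simp
  define W where "W = max 0 (Gs dx ?V j + psi M \<delta> (max 0 (x j + 1)) / 2 ^ (j * K))"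
  have G': "Gs dx ?V' (Suc j) = Qf (Suc j * K) \<theta> W"
  proof -
    have "Gs dx ?V' (Suc j) = 1 - ?V' (sc dx j)"
      unfolding Gs_def gconst_def gcoef_def wc_def by simp
    then show ?thesis using B unfolding E W_def Gs_def xj by simp
  qed
  have psin: "psi M \<delta> (max 0 (x j + 1)) \<ge> 0" using psi_nonneg assms by simp
  have W0': "W = Gs dx ?V j + psi M \<delta> (max 0 (x j + 1)) / 2 ^ (j * K)"
    unfolding W_def using IH(2) psin by simp
  have a: "\<forall>i. Suc j \<le> i \<and> i < dx \<longrightarrow> ?V' i = max 0 (x i + 1)"
  proof (intro allI impI)
    fix i assume i: "Suc j \<le> i \<and> i < dx"
    then have "i \<noteq> j" "i \<noteq> sc dx j" unfolding sc_def by auto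
    then show "?V' i = max 0 (x i + 1)" using B IH(1) i unfolding E by auto
  qed
  have b: "Gs dx ?V' (Suc j) \<ge> 0" using G' Qf_nonneg by simp
  have c: "(\<exists>i<Suc j. x i < 0 \<or> x i > 1) \<longrightarrow> Gs dx ?V' (Suc j) = 1"
  proof
    assume "\<exists>i<Suc j. x i < 0 \<or> x i > 1"
    then consider "\<exists>i<j. x i < 0 \<or> x i > 1" | "x j < 0 \<or> x j > 1" using less_Suc_eq by blast
    then have "W \<ge> 1"
    proof cases
      case 1
      then show ?thesis using IH(3) W0' psin by simp
    next
      case 2
      have "psi M \<delta> (max 0 (x j + 1)) \<ge> M * \<delta>" by (rule psi_out[OF 2]) (use assms in auto)
      moreover have "M * \<delta> \<ge> 2 ^ (j * K)" unfolding assms(6)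
        using jd by (intro power_increasing) auto
      ultimately have "psi M \<delta> (max 0 (x j + 1)) / 2 ^ (j * K) \<ge> 1" by simp
      then show ?thesis using W0' IH(2) by linarith
    qed
    then show "Gs dx ?V' (Suc j) = 1" using G' Qf_ge1 th by simp
  qed
  have d: "(\<forall>i<Suc j. good \<delta> K (x i)) \<longrightarrow> (\<exists>H::nat. H < 2 ^ (Suc j * K) \<and> Gs dx ?V' (Suc j) = real H / 2 ^ (Suc j * K) \<and>
        Gs dx ?V' (Suc j) = (\<Sum>i<Suc j. qK K (x i) * (1/2) ^ (i * K)))"
  proof
    assume g: "\<forall>i<Suc j. good \<delta> K (x i)"
    then obtain H where H: "H < 2 ^ (j * K)" "Gs dx ?V j = real H / 2 ^ (j * K)"
        "Gs dx ?V j = (\<Sum>i<j. qK K (x i) * (1/2) ^ (i * K))" using IH(4) by auto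
    obtain h r where hr: "h < 2 ^ K" "x j = (real h + r) / 2 ^ K" "\<delta> * 2 ^ K \<le> r" "r \<le> 1 - \<delta> * 2 ^ K"
      "qK K (x j) = real h / 2 ^ K" "\<delta> \<le> x j" "x j \<le> 1 - \<delta>"
      using good_decomp[of \<delta> K "x j"] g assms by auto
    have ps: "psi M \<delta> (max 0 (x j + 1)) = x j" using psi_in hr assms by simp
    define H' where "H' = 2 ^ K * H + h"
    have pk: "(2::real) ^ (Suc j * K) = 2 ^ K * 2 ^ (j * K)" by (simp add: power_add)
    have pk': "(2::nat) ^ (Suc j * K) = 2 ^ K * 2 ^ (j * K)" by (simp add: power_add)
    have H'l: "H' < 2 ^ (Suc j * K)"
    proof -
      have "H' < 2 ^ K * H + 2 ^ K" unfolding H'_def using hr by simp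
      also have "\<dots> = 2 ^ K * (H + 1)" by simp
      also have "\<dots> \<le> 2 ^ K * 2 ^ (j * K)" using H by (intro mult_left_mono) auto
      finally show ?thesis unfolding pk' .
    qed
    have Wv: "W = (real H' + r) / 2 ^ (Suc j * K)"
    proof -
      have "W = real H / 2 ^ (j * K) + x j / 2 ^ (j * K)" using W0' ps H(2) by simp
      then show ?thesis unfolding hr(2) H'_def pk by (simp add: field_simps)
    qed
    have r0: "0 \<le> r" using hr assms by (smt (verit) zero_le_power mult_nonneg_nonneg)
    have Q: "Gs dx ?V' (Suc j) = real H' / 2 ^ (Suc j * K)"
      unfolding G' Wv using Qf_good[OF th assms(4) r0 _ H'l] hr assms by simp
    have "real H' / 2 ^ (Suc j * K) = Gs dx ?V j + qK K (x j) * (1/2) ^ (j * K)"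
      unfolding H(2) hr(5) H'_def pk by (simp add: field_simps power_one_over)
    then have "Gs dx ?V' (Suc j) = (\<Sum>i<Suc j. qK K (x i) * (1/2) ^ (i * K))"
      using Q H(3) by simp
    then show "\<exists>H::nat. H < 2 ^ (Suc j * K) \<and> Gs dx ?V' (Suc j) = real H / 2 ^ (Suc j * K) \<and>
        Gs dx ?V' (Suc j) = (\<Sum>i<Suc j. qK K (x i) * (1/2) ^ (i * K))"
      using Q H'l by blast
  qed
  show ?case using a b c d by blast
qed



lemma output_val:
  fixes x :: "nat \<Rightarrow> real" and c \<theta> \<delta> M :: real and K dx :: nat
  assumes "dx \<ge> 1"
  defines "s \<equiv> sc dx (dx - 1)"
  defines "P \<equiv> blocks dx K \<theta> \<delta> M dx @ [Upd s s 1 s 0 s 0 (c - 1)]"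
  defines "ds \<equiv> dx # replicate (length P + 1) (Suc dx) @ [1]"
  defines "ls \<equiv> (W0, b0 dx) # map mk P @ [(\<lambda>i j. if j = s then -1 else 0, \<lambda>i. c)]"
  shows "net_eval ds ls x 0 = min c (Gs dx (exec (Suc dx) (blocks dx K \<theta> \<delta> M dx) (relu (affine W0 (b0 dx) dx x))) dx)"
proof -
  let ?v0 = "relu (affine W0 (b0 dx) dx x)"
  let ?V = "exec (Suc dx) (blocks dx K \<theta> \<delta> M dx) ?v0"
  let ?f = "(\<lambda>i j. if j = s then -1 else 0, \<lambda>i. c) :: (nat \<Rightarrow> nat \<Rightarrow> real) \<times> (nat \<Rightarrow> real)"
  obtain l ls' where e: "map mk P @ [?f] = l # ls'" by (cases "map mk P @ [?f]") auto
  have "net_eval ds ls x = net_eval (Suc dx # replicate (length P) (Suc dx) @ [1]) (map mk P @ [?f]) ?v0"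
    unfolding ds_def ls_def using e by simp
  also have "\<dots> = affine (fst ?f) (snd ?f) (Suc dx) (exec (Suc dx) P ?v0)"
    by (simp add: net_exec)
  finally have N: "net_eval ds ls x 0 = affine (fst ?f) (snd ?f) (Suc dx) (exec (Suc dx) P ?v0) 0" by simp
  have sn: "s < Suc dx" unfolding s_def using sc_lt[of "dx - 1" dx] assms(1) by simp
  define U where "U = exec (Suc dx) P ?v0"
  have U: "U = step (Suc dx) (Upd s s 1 s 0 s 0 (c - 1)) ?V" unfolding U_def P_def by (simp add: exec_append)
  have Us: "U s = max 0 (?V s + c - 1)" unfolding U using sn by (simp add: step_val)
  have A: "affine (fst ?f) (snd ?f) (Suc dx) U 0 = c - U s"
  proof -
    have "(\<Sum>j<Suc dx. (if j = s then -1 else 0) * U j) = (\<Sum>j<Suc dx. if j = s then - U s else 0)"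
      by (rule sum.cong) auto
    then show ?thesis unfolding affine_def using sn by simp
  qed
  have G: "Gs dx ?V dx = 1 - ?V s" unfolding Gs_def gconst_def gcoef_def wc_def s_def using assms(1) by simp
  show ?thesis using N A Us G unfolding U_def by (simp add: min_def max_def)
qed



lemma measure_part:
  fixes dx K :: nat and \<delta> \<gamma> :: real
  assumes "dx \<ge> 1" "\<delta> > 0" "real dx * (2 ^ K + 1) * (2 * \<delta>) < \<gamma>"
  defines "B \<equiv> \<lambda>j h. PiE {..<dx} (\<lambda>i. if i = j then {real h / 2 ^ K - \<delta> .. real h / 2 ^ K + \<delta>} else {0..1::real})"
  defines "D \<equiv> PiE {..<dx} (\<lambda>_. {0..1::real}) \<inter> (\<Union>j<dx. \<Union>h\<in>{..(2::nat) ^ K}. B j h)"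
  shows "D \<in> sets (PiM {..<dx} (\<lambda>_. lborel))"
    "emeasure (PiM {..<dx} (\<lambda>_. lborel)) D < ennreal \<gamma>"
proof -
  interpret product_sigma_finite "\<lambda>_::nat. lborel :: real measure" by standard
  have Bs: "B j h \<in> sets (PiM {..<dx} (\<lambda>_. lborel))" for j h
    unfolding B_def by (rule sets_PiM_I_finite) auto
  have Us: "(\<Union>j<dx. \<Union>h\<in>{..(2::nat) ^ K}. B j h) \<in> sets (PiM {..<dx} (\<lambda>_. lborel))"
    using Bs by (intro sets.finite_UN) auto
  show Ds: "D \<in> sets (PiM {..<dx} (\<lambda>_. lborel))"
    unfolding D_def using Us by (intro sets.Int sets_PiM_I_finite) auto
  have Bm: "emeasure (PiM {..<dx} (\<lambda>_. lborel)) (B j h) = ennreal (2 * \<delta>)" if "j < dx" for j h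
  proof -
    have "emeasure (PiM {..<dx} (\<lambda>_. lborel)) (B j h) =
      (\<Prod>i<dx. emeasure lborel (if i = j then {real h / 2 ^ K - \<delta> .. real h / 2 ^ K + \<delta>} else {0..1::real}))"
      unfolding B_def by (rule emeasure_PiM) auto
    also have "\<dots> = (\<Prod>i<dx. if i = j then ennreal (2 * \<delta>) else 1)"
      using assms(2) by (intro prod.cong) auto
    also have "\<dots> = ennreal (2 * \<delta>)" using that by (simp add: prod.delta)
    finally show ?thesis .
  qed
  have "emeasure (PiM {..<dx} (\<lambda>_. lborel)) D \<le> emeasure (PiM {..<dx} (\<lambda>_. lborel)) (\<Union>j<dx. \<Union>h\<in>{..(2::nat) ^ K}. B j h)"
    unfolding D_def using Us by (intro emeasure_mono) auto
  also have "\<dots> \<le> (\<Sum>j<dx. emeasure (PiM {..<dx} (\<lambda>_. lborel)) (\<Union>h\<in>{..(2::nat) ^ K}. B j h))"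
    using Bs by (intro emeasure_subadditive_finite) (auto intro!: sets.finite_UN)
  also have "\<dots> \<le> (\<Sum>j<dx. (\<Sum>h\<in>{..(2::nat) ^ K}. emeasure (PiM {..<dx} (\<lambda>_. lborel)) (B j h)))"
    using Bs by (intro sum_mono emeasure_subadditive_finite) auto
  also have "\<dots> = (\<Sum>j<dx. (\<Sum>h\<in>{..(2::nat) ^ K}. ennreal (2 * \<delta>)))"
    using Bm by simp
  also have "\<dots> = ennreal (real dx * (2 ^ K + 1) * (2 * \<delta>))"
    using assms(2) by (simp add: ennreal_mult ennreal_of_nat_eq_real_of_nat mult.assoc add.commute)
  also have "\<dots> < ennreal \<gamma>"
    using assms by (subst ennreal_less_iff) auto
  finally show "emeasure (PiM {..<dx} (\<lambda>_. lborel)) D < ennreal \<gamma>" .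
qed



theorem lemma7:
  fixes dx K :: nat and \<gamma> :: real
  assumes "dx \<ge> 1" and "\<gamma> > 0"
  shows "\<exists>ds ls D.
    relu_net dx 1 ds ls \<and> net_width ds = dx + 1 \<and>
    D \<in> sets (PiM {..<dx} (\<lambda>_. lborel)) \<and>
    D \<subseteq> PiE {..<dx} (\<lambda>_. {0..1}) \<and>
    (\<forall>x \<in> PiE {..<dx} (\<lambda>_. {0..1}) - D. net_eval ds ls x 0 = encode K dx x) \<and>
    emeasure (PiM {..<dx} (\<lambda>_. lborel)) D < ennreal \<gamma> \<and>
    (\<lambda>x. net_eval ds ls x 0) ` D \<subseteq> {0..1} \<and>
    (\<lambda>x. net_eval ds ls x 0) ` (PiE {..<dx} (\<lambda>_. UNIV) - PiE {..<dx} (\<lambda>_. {0..1}))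
      = {1 - (1/2) ^ (dx * K)}"
proof -
  define \<delta> :: real where "\<delta> = min (1 / 2 ^ K / 2) (\<gamma> / (4 * real dx * (2 ^ K + 1)))"
  define \<theta> where "\<theta> = \<delta> * 2 ^ K"
  define M :: real where "M = 2 ^ (dx * K) / \<delta>"
  define c :: real where "c = 1 - (1/2) ^ (dx * K)"
  define s where "s = sc dx (dx - 1)"
  define P where "P = blocks dx K \<theta> \<delta> M dx @ [Upd s s 1 s 0 s 0 (c - 1)]"
  define ds where "ds = dx # replicate (length P + 1) (Suc dx) @ [1]"
  define ls where "ls = (W0, b0 dx) # map mk P @ [(\<lambda>i j. if j = s then -1 else 0, \<lambda>i::nat. c)]"
  define B where "B = (\<lambda>j h. PiE {..<dx} (\<lambda>i. if i = j then {real h / 2 ^ K - \<delta> .. real h / 2 ^ K + \<delta>} else {0..1::real}))"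
  define D where "D = PiE {..<dx} (\<lambda>_. {0..1::real}) \<inter> (\<Union>j<dx. \<Union>h\<in>{..(2::nat) ^ K}. B j h)"
  let ?F = "\<lambda>x. Gs dx (exec (Suc dx) (blocks dx K \<theta> \<delta> M dx) (relu (affine W0 (b0 dx) dx x))) dx"
  have dpos: "\<delta> > 0" unfolding \<delta>_def using assms by (simp add: add_pos_pos)
  have dle: "\<delta> \<le> 1 / 2 ^ K / 2" unfolding \<delta>_def by simp
  have dle2: "\<delta> \<le> \<gamma> / (4 * real dx * (2 ^ K + 1))" unfolding \<delta>_def by simp
  have th1: "\<theta> \<le> 1" using dle unfolding \<theta>_def by (simp add: field_simps)
  have "\<delta> \<le> 1" using dle by (smt (verit) divide_le_eq_1 one_le_power)
  then have M1: "M \<ge> 1" unfolding M_def using dpos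
    by (simp add: field_simps) (smt (verit) one_le_power)
  have Md: "M * \<delta> = 2 ^ (dx * K)" unfolding M_def using dpos by simp
  have out: "net_eval ds ls x 0 = min c (?F x)" for x
    unfolding ds_def ls_def P_def s_def by (rule output_val[OF assms(1)])
  note ch = chain[OF order_refl dpos \<theta>_def th1 M1 Md]
  have c01: "0 \<le> c" "c \<le> 1" unfolding c_def by (auto simp: power_le_one)
  have meas: "D \<in> sets (PiM {..<dx} (\<lambda>_. lborel))" "emeasure (PiM {..<dx} (\<lambda>_. lborel)) D < ennreal \<gamma>"
  proof -
    have "real dx * (2 ^ K + 1) * (2 * \<delta>) \<le> real dx * (2 ^ K + 1) * (2 * (\<gamma> / (4 * real dx * (2 ^ K + 1))))"
      using dle2 assms by (intro mult_left_mono) auto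
    also have "\<dots> = \<gamma> / 2"
    proof -
      have p: "(0::real) < 2 ^ K + 1" by (metis add_pos_pos zero_less_one zero_less_numeral zero_less_power)
      define Z where "Z = real dx * (2 ^ K + 1)"
      have nz: "Z \<noteq> 0" using assms p unfolding Z_def by simp
      have e: "4 * real dx * (2 ^ K + 1) = 4 * Z" unfolding Z_def by simp
      show ?thesis unfolding e unfolding Z_def[symmetric] using nz by (simp add: field_simps)
    qed
    also have "\<dots> < \<gamma>" using assms by simp
    finally have "real dx * (2 ^ K + 1) * (2 * \<delta>) < \<gamma>" .
    then show "D \<in> sets (PiM {..<dx} (\<lambda>_. lborel))" "emeasure (PiM {..<dx} (\<lambda>_. lborel)) D < ennreal \<gamma>"
      using measure_part[OF assms(1) dpos] unfolding D_def B_def by auto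
  qed
  have rn: "relu_net dx 1 ds ls" unfolding relu_net_def ds_def ls_def by simp
  have nw: "net_width ds = dx + 1" unfolding net_width_def ds_def
    using foldr_max_rep[of "length P" "Suc dx"] by simp
  have sub: "D \<subseteq> PiE {..<dx} (\<lambda>_. {0..1})" unfolding D_def by auto
  have good_part: "\<forall>x \<in> PiE {..<dx} (\<lambda>_. {0..1}) - D. net_eval ds ls x 0 = encode K dx x"
  proof
    fix x assume x: "x \<in> PiE {..<dx} (\<lambda>_. {0..1::real}) - D"
    have g: "\<forall>i<dx. good \<delta> K (x i)"
    proof (intro allI impI)
      fix i assume i: "i < dx"
      have xc: "x \<in> PiE {..<dx} (\<lambda>_. {0..1::real})" and xD: "x \<notin> D" using x by auto
      have xe: "\<forall>i'\<in>{..<dx}. x i' \<in> {0..1}" "x \<in> extensional {..<dx}"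
        using xc by (simp_all add: PiE_iff)
      have x01: "0 \<le> x i" "x i \<le> 1" using xe(1) i by auto
      have "\<delta> < \<bar>x i - real h / 2 ^ K\<bar>" if h: "h \<le> 2 ^ K" for h :: nat
      proof (rule ccontr)
        assume "\<not> \<delta> < \<bar>x i - real h / 2 ^ K\<bar>"
        then have xi: "x i \<in> {real h / 2 ^ K - \<delta> .. real h / 2 ^ K + \<delta>}"
          by (auto simp: abs_le_iff not_less)
        have "\<forall>i'\<in>{..<dx}. x i' \<in> (if i' = i then {real h / 2 ^ K - \<delta> .. real h / 2 ^ K + \<delta>} else {0..1::real})"
          using xe(1) xi by simp
        then have "x \<in> B i h" unfolding B_def using xe(2) by (simp add: PiE_iff)
        then have "x \<in> (\<Union>j<dx. \<Union>h\<in>{..(2::nat) ^ K}. B j h)" using i h by blast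
        then have "x \<in> D" unfolding D_def using xc by blast
        then show False using xD by simp
      qed
      then show "good \<delta> K (x i)" unfolding good_def using x01 by auto
    qed
    obtain H :: nat where H: "H < 2 ^ (dx * K)" "?F x = real H / 2 ^ (dx * K)"
      "?F x = (\<Sum>i<dx. qK K (x i) * (1/2) ^ (i * K))" using ch g by blast
    have "real H + 1 \<le> 2 ^ (dx * K)" using H(1)
      by (metis Suc_leI of_nat_Suc of_nat_le_iff of_nat_numeral of_nat_power add.commute)
    then have "real H / 2 ^ (dx * K) \<le> 1 - 1 / 2 ^ (dx * K)" by (simp add: field_simps)
    then have "?F x \<le> c" unfolding c_def H(2) by (simp add: power_one_over)
    then show "net_eval ds ls x 0 = encode K dx x" unfolding out encode_def using H(3) by simp
  qed
  have bad_part: "(\<lambda>x. net_eval ds ls x 0) ` D \<subseteq> {0..1}"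
  proof
    fix y assume "y \<in> (\<lambda>x. net_eval ds ls x 0) ` D"
    then obtain x where y: "y = min c (?F x)" using out by auto
    have "?F x \<ge> 0" using ch by blast
    then show "y \<in> {0..1}" using y c01 by auto
  qed
  have outside: "(\<lambda>x. net_eval ds ls x 0) ` (PiE {..<dx} (\<lambda>_. UNIV) - PiE {..<dx} (\<lambda>_. {0..1}))
      = {1 - (1/2) ^ (dx * K)}"
  proof -
    have val: "net_eval ds ls x 0 = c" if x: "x \<in> PiE {..<dx} (\<lambda>_. UNIV) - PiE {..<dx} (\<lambda>_. {0..1::real})" for x
    proof -
      have "\<exists>i<dx. x i < 0 \<or> x i > 1" using x by (auto simp: PiE_iff not_le)
      then have "?F x = 1" using ch by blast
      then show ?thesis unfolding out using c01 by simp
    qed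
    define x0 :: "nat \<Rightarrow> real" where "x0 = restrict (\<lambda>_. 2) {..<dx}"
    have x0: "x0 \<in> PiE {..<dx} (\<lambda>_. UNIV) - PiE {..<dx} (\<lambda>_. {0..1::real})"
    proof -
      have "x0 0 = 2" "0 < dx" unfolding x0_def using assms(1) by auto
      then have "x0 \<notin> PiE {..<dx} (\<lambda>_. {0..1::real})"
        using PiE_mem[of x0 "{..<dx}" "\<lambda>_. {0..1::real}" 0] by auto
      moreover have "x0 \<in> PiE {..<dx} (\<lambda>_. UNIV)" unfolding x0_def by simp
      ultimately show ?thesis by simp
    qed
    show ?thesis
    proof
      show "(\<lambda>x. net_eval ds ls x 0) ` (PiE {..<dx} (\<lambda>_. UNIV) - PiE {..<dx} (\<lambda>_. {0..1})) \<subseteq> {1 - (1/2) ^ (dx * K)}"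
        using val unfolding c_def by auto
      have "net_eval ds ls x0 0 = 1 - (1/2) ^ (dx * K)" using val[OF x0] unfolding c_def .
      then show "{1 - (1/2) ^ (dx * K)} \<subseteq> (\<lambda>x. net_eval ds ls x 0) ` (PiE {..<dx} (\<lambda>_. UNIV) - PiE {..<dx} (\<lambda>_. {0..1}))"
        using x0 by (auto intro: rev_image_eqI)
    qed
  qed
  show ?thesis
    apply (rule exI[of _ ds], rule exI[of _ ls], rule exI[of _ D])
    by (intro conjI rn nw meas sub good_part bad_part outside)
qed

end
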